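(* If $L$ is a regular language, then ${\rm bdir}(L)$ is regular.
   Context: For $w=a_1\cdots a_{2n}$ of even length, ${\rm bdir}(w)=a_1a_{2n}a_2a_{2n-1}\cdots a_na_{n+1}$; for $w=a_1\cdots a_{2n+1}$ of odd length, ${\rm bdir}(w)=a_1a_{2n+1}a_2a_{2n}\cdots a_na_{n+2}a_{n+1}$. ${\rm bdir}(L)=\{{\rm bdir}(w):w\in L\}$. *)

theory Defs
  imports Main
begin

function bdir :: "'a list \<Rightarrow> 'a list" where
  "bdir w = (if length w \<le> 1 then w
             else hd w # last w # bdir (butlast (tl w)))"
  by auto
termination by (relation "measure length") auto

declare bdir.simps [simp del]

definition bdir_lang :: "'a list set \<Rightarrow> 'a list set" where
  "bdir_lang L = bdir ` L"

definition regular :: "'a set \<Rightarrow> 'a list set \<Rightarrow> bool" where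
  "regular \<Sigma> L \<longleftrightarrow> finite \<Sigma> \<and> L \<subseteq> lists \<Sigma> \<and>
     (\<exists>(Q :: nat set) (\<delta> :: nat \<Rightarrow> 'a \<Rightarrow> nat) q0 F.
        finite Q \<and> q0 \<in> Q \<and> F \<subseteq> Q \<and>
        (\<forall>q\<in>Q. \<forall>a\<in>\<Sigma>. \<delta> q a \<in> Q) \<and>
        L = {w \<in> lists \<Sigma>. foldl \<delta> q0 w \<in> F})"

lemma "bdir [1::nat,2,3,4,5] = [1,5,2,4,3]" "bdir [1::nat,2,3,4] = [1,4,2,3]"
  by (simp_all add: bdir.simps)

end

theory Submission
  imports Defs
begin

lemma regular_from_dfa:
  fixes Q :: "'b set" and \<delta> :: "'b \<Rightarrow> 'a \<Rightarrow> 'b"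
  assumes fS: "finite \<Sigma>" and fQ: "finite Q" and q0: "q0 \<in> Q" and FQ: "F \<subseteq> Q"
    and cl: "\<forall>q\<in>Q. \<forall>a\<in>\<Sigma>. \<delta> q a \<in> Q"
    and L: "L = {w \<in> lists \<Sigma>. foldl \<delta> q0 w \<in> F}"
  shows "regular \<Sigma> L"
proof -
  obtain n and f :: "nat \<Rightarrow> 'b" where Qf: "Q = f ` {i. i<n}" and inj: "inj_on f {i. i<n}"
    using finite_imp_nat_seg_image_inj_on[OF fQ] by blast
  define e where "e = the_inv_into {i. i<n} f"
  have fe: "f (e q) = q" if "q \<in> Q" for q
    using that unfolding e_def Qf by (simp add: f_the_inv_into_f[OF inj])
  have einj: "inj_on e Q"
    by (metis fe inj_onI)
  define \<delta>' where "\<delta>' = (\<lambda>i a. e (\<delta> (f i) a))"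
  have run: "foldl \<delta>' (e q) w = e (foldl \<delta> q w)" if "q \<in> Q" "w \<in> lists \<Sigma>" for q w
    using that
  proof (induction w arbitrary: q)
    case Nil then show ?case by simp
  next
    case (Cons a w)
    then have "\<delta>' (e q) a = e (\<delta> q a)" by (simp add: \<delta>'_def fe)
    moreover have "\<delta> q a \<in> Q" using Cons cl by auto
    ultimately show ?case using Cons by simp
  qed
  have runQ: "foldl \<delta> q w \<in> Q" if "q \<in> Q" "w \<in> lists \<Sigma>" for q w
    using that by (induction w arbitrary: q) (use cl in auto)
  have "L \<subseteq> lists \<Sigma>" using L by auto
  moreover have "L = {w \<in> lists \<Sigma>. foldl \<delta>' (e q0) w \<in> e ` F}"
  proof -
    have "foldl \<delta>' (e q0) w \<in> e ` F \<longleftrightarrow> foldl \<delta> q0 w \<in> F" if "w \<in> lists \<Sigma>" for w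
      using run[OF q0 that] runQ[OF q0 that] einj FQ
      by (metis (no_types, lifting) image_iff inj_on_image_mem_iff)
    then show ?thesis using L by auto
  qed
  moreover have "\<forall>q\<in>e ` Q. \<forall>a\<in>\<Sigma>. \<delta>' q a \<in> e ` Q"
    using cl fe by (auto simp: \<delta>'_def)
  ultimately show ?thesis unfolding regular_def
    using fS fQ q0 FQ
    by (intro conjI exI[of _ "e ` Q"] exI[of _ \<delta>'] exI[of _ "e q0"] exI[of _ "e ` F"]) auto
qed

fun unbdir :: "'a list \<Rightarrow> 'a list" where
  "unbdir (x # y # r) = x # unbdir r @ [y]"
| "unbdir v = v"

lemma bdir_step: "bdir (x # m @ [y]) = x # y # bdir m"
  by (subst bdir.simps) simp

lemma bdir_short: "length w \<le> 1 \<Longrightarrow> bdir w = w"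
  by (subst bdir.simps) simp

lemma bdir_unbdir: "bdir (unbdir v) = v"
  by (induction v rule: unbdir.induct) (auto simp: bdir_step bdir_short)

lemma set_unbdir: "set (unbdir v) = set v"
  by (induction v rule: unbdir.induct) auto

lemma list_cases3:
  "w = [] \<or> (\<exists>x. w = [x]) \<or> (\<exists>x m y. w = x # m @ [y])"
  by (metis append_butlast_last_id list.exhaust)

lemma set_bdir: "set (bdir w) = set w"
proof (induction w rule: length_induct)
  case (1 w)
  show ?case
    using list_cases3[of w]
  proof (elim disjE exE)
    fix x m y assume w: "w = x # m @ [y]"
    then have "set (bdir m) = set m" using 1 by auto
    then show ?thesis using w by (auto simp: bdir_step)
  qed (auto simp: bdir_short)
qed

theorem mainTheorem15:
  fixes \<Sigma> :: "'a set" and L :: "'a list set"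
  assumes "regular \<Sigma> L"
  shows "regular \<Sigma> (bdir_lang L)"
proof -
  from assms obtain Q :: "nat set" and \<delta> q0 F where
    fS: "finite \<Sigma>" and LS: "L \<subseteq> lists \<Sigma>" and fQ: "finite Q" and q0: "q0 \<in> Q"
    and FQ: "F \<subseteq> Q" and cl: "\<forall>q\<in>Q. \<forall>a\<in>\<Sigma>. \<delta> q a \<in> Q"
    and L: "L = {w \<in> lists \<Sigma>. foldl \<delta> q0 w \<in> F}"
    unfolding regular_def by blast
  define X where "X = Q \<times> Pow Q \<times> (UNIV :: bool set)"
  define \<delta>X where "\<delta>X = (\<lambda>(p, S, b) a. if b then (p, {q\<in>Q. \<delta> q a \<in> S}, False)
                                         else (\<delta> p a, S, True))"
  define FX where "FX = {(p, S, b). (p, S, b) \<in> X \<and> p \<in> S}"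
  have runQ: "foldl \<delta> q w \<in> Q" if "q \<in> Q" "w \<in> lists \<Sigma>" for q w
    using that by (induction w arbitrary: q) (use cl in auto)
  have clX: "\<forall>s\<in>X. \<forall>a\<in>\<Sigma>. \<delta>X s a \<in> X"
    using cl by (auto simp: X_def \<delta>X_def)
  have runX: "foldl \<delta>X s w \<in> X" if "s \<in> X" "w \<in> lists \<Sigma>" for s w
    using that by (induction w arbitrary: s) (use clX in auto)
  have key: "(case foldl \<delta>X (p, S, False) (bdir w) of (p', S', b') \<Rightarrow> p' \<in> S')
              \<longleftrightarrow> foldl \<delta> p w \<in> S"
    if "p \<in> Q" "S \<subseteq> Q" "w \<in> lists \<Sigma>" for p S w
    using that
  proof (induction w arbitrary: p S rule: length_induct)
    case (1 w)
    show ?case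
      using list_cases3[of w]
    proof (elim disjE exE)
      fix x m y assume w: "w = x # m @ [y]"
      have xy: "x \<in> \<Sigma>" "y \<in> \<Sigma>" "m \<in> lists \<Sigma>" using 1(4) w by auto
      have px: "\<delta> p x \<in> Q" using cl xy 1(2) by auto
      have IH: "(case foldl \<delta>X (\<delta> p x, {q\<in>Q. \<delta> q y \<in> S}, False) (bdir m) of (p', S', b') \<Rightarrow> p' \<in> S')
              \<longleftrightarrow> foldl \<delta> (\<delta> p x) m \<in> {q\<in>Q. \<delta> q y \<in> S}"
        using 1(1) w px xy by auto
      have "foldl \<delta> (\<delta> p x) m \<in> Q" using runQ px xy by auto
      then show ?thesis using IH w by (simp add: bdir_step \<delta>X_def)
    qed (auto simp: bdir_short \<delta>X_def)
  qed
  have "regular \<Sigma> (bdir_lang L)"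
  proof (rule regular_from_dfa[OF fS _ _ _ clX])
    show "finite X" unfolding X_def using fQ by simp
    show "(q0, F, False) \<in> X" using q0 FQ by (simp add: X_def)
    show "FX \<subseteq> X" by (auto simp: FX_def)
    show "bdir_lang L = {w \<in> lists \<Sigma>. foldl \<delta>X (q0, F, False) w \<in> FX}"
    proof (intro set_eqI iffI)
      fix v assume "v \<in> bdir_lang L"
      then obtain w where w: "w \<in> L" "v = bdir w" by (auto simp: bdir_lang_def)
      have wl: "w \<in> lists \<Sigma>" using w LS by auto
      have vl: "v \<in> lists \<Sigma>" using wl w set_bdir by (metis in_listsI in_lists_conv_set)
      have X0: "(q0, F, False) \<in> X" using q0 FQ by (simp add: X_def)
      have "foldl \<delta> q0 w \<in> F" using w L by auto
      then show "v \<in> {w \<in> lists \<Sigma>. foldl \<delta>X (q0, F, False) w \<in> FX}"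
        using key[OF q0 FQ wl] runX[OF X0 vl] vl w
        by (auto simp: FX_def split: prod.splits)
    next
      fix v assume v: "v \<in> {w \<in> lists \<Sigma>. foldl \<delta>X (q0, F, False) w \<in> FX}"
      define w where "w = unbdir v"
      have vw: "v = bdir w" by (simp add: w_def bdir_unbdir)
      have wl: "w \<in> lists \<Sigma>" using v set_unbdir unfolding w_def
        by (metis (no_types, lifting) in_lists_conv_set mem_Collect_eq)
      have "foldl \<delta> q0 w \<in> F"
        using key[OF q0 FQ wl] v vw by (auto simp: FX_def split: prod.splits)
      then have "w \<in> L" using L wl by auto
      then show "v \<in> bdir_lang L" using vw by (auto simp: bdir_lang_def)
    qed
  qed
  then show ?thesis .
qed

end
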